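(* Under Assumption 1, for the GARCH-2F variance process, with $\varphi=\mathbb{E}\big[\|\boldsymbol{B}+\boldsymbol{b}(\boldsymbol{W}_t)\|\big]$ and $c=\|\boldsymbol{\omega}\|+\mathbb{E}\big[\|\boldsymbol{\alpha}\boldsymbol{f}(\boldsymbol{W}_t)\|\big]<\infty$, one has for every $\boldsymbol{x}\in\mathcal{D}$ $$\mathbb{E}\big[\|\boldsymbol{v}_t\|\ \big|\ \boldsymbol{v}_{t-1}=\boldsymbol{x}\big]\le\varphi\|\boldsymbol{x}\|+c.$$
   Context: Model (GARCH-2F): $Z_{1,t},Z_{2,t}$ i.i.d. $N(0,1)$ in $t$, mutually independent; $\boldsymbol{W}_t=(W_{1,t},W_{2,t})^T=(Z_{1,t-1},Z_{2,t-1})^T$ (independent of $\boldsymbol{v}_{t-1}$); $\boldsymbol{v}_t=\boldsymbol{\omega}+\boldsymbol{\beta}\boldsymbol{v}_{t-1}+\boldsymbol{\alpha}\big[(W_{1,t}-\gamma_1\sqrt{v_{1,t-1}})^2,(W_{2,t}-\gamma_2\sqrt{v_{2,t-1}})^2\big]^T$ with parameters as in Assumption 1 ($\omega_i>0$, $\beta_{ij}\ge0$, $\alpha_{ij}\ge0$, $\alpha_{11}+\alpha_{12}>0$, $\alpha_{21}+\alpha_{22}>0$, $\beta_{11}+\beta_{12}>0$, $\beta_{21}+\beta_{22}>0$), $\gamma_1,\gamma_2\in\mathbb{R}$. State space $\mathcal{D}=[\omega_1,\infty)\times[\omega_2,\infty)$. $\boldsymbol{B}$ has entries $B_{ij}=\beta_{ij}+\alpha_{ij}\gamma_j^2$.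 $\boldsymbol{f}(\boldsymbol{W}_t)=\big((|\gamma_1|+\sqrt{\gamma_1^2+W_{1,t}^2})^2,(|\gamma_2|+\sqrt{\gamma_2^2+W_{2,t}^2})^2\big)^T$ and $\boldsymbol{b}(\boldsymbol{W}_t)$ is the $2\times2$ matrix with entries $b_{ij}=\alpha_{ij}W_{j,t}^2\mathbf{1}_{(\gamma_jW_{j,t}<0)}$. $\|\cdot\|$ is the Euclidean vector norm and the induced ($L_2$ operator) matrix norm. *)

theory Defs
  imports "HOL-Probability.Probability"
begin

definition stdN2 :: "(real \<times> real) measure" where
  "stdN2 = density lborel std_normal_density \<Otimes>\<^sub>M density lborel std_normal_density"

definition vec2 :: "real \<Rightarrow> real \<Rightarrow> real^2" where
  "vec2 a b = (\<chi> i. if i = 1 then a else b)"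

definition garch_step :: "real^2 \<Rightarrow> real^2^2 \<Rightarrow> real^2^2 \<Rightarrow> real^2 \<Rightarrow> real^2 \<Rightarrow> real^2 \<Rightarrow> real^2" where
  "garch_step \<omega> \<beta> \<alpha> \<gamma> x W = \<omega> + \<beta> *v x + \<alpha> *v (\<chi> j. (W$j - \<gamma>$j * sqrt (x$j))\<^sup>2)"

definition stateD :: "real^2 \<Rightarrow> (real^2) set" where
  "stateD \<omega> = {x. \<omega>$1 \<le> x$1 \<and> \<omega>$2 \<le> x$2}"

definition Bmat :: "real^2^2 \<Rightarrow> real^2^2 \<Rightarrow> real^2 \<Rightarrow> real^2^2" where
  "Bmat \<beta> \<alpha> \<gamma> = (\<chi> i j. \<beta>$i$j + \<alpha>$i$j * (\<gamma>$j)\<^sup>2)"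

definition bmat :: "real^2^2 \<Rightarrow> real^2 \<Rightarrow> real^2 \<Rightarrow> real^2^2" where
  "bmat \<alpha> \<gamma> W = (\<chi> i j. \<alpha>$i$j * (W$j)\<^sup>2 * (if \<gamma>$j * W$j < 0 then 1 else 0))"

definition ffun :: "real^2 \<Rightarrow> real^2 \<Rightarrow> real^2" where
  "ffun \<gamma> W = (\<chi> i. (\<bar>\<gamma>$i\<bar> + sqrt ((\<gamma>$i)\<^sup>2 + (W$i)\<^sup>2))\<^sup>2)"

definition mnorm :: "real^2^2 \<Rightarrow> real" where
  "mnorm M = onorm (\<lambda>v. M *v v)"

end

theory Submission
  imports Defs
begin


lemma ps: "prob_space stdN2"
  unfolding stdN2_def by (intro prob_space_pair prob_space_normal_density) auto

lemma sets_stdN2: "sets stdN2 = sets ((borel::real measure) \<Otimes>\<^sub>M (borel::real measure))"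
  unfolding stdN2_def by (rule sets_pair_measure_cong) simp_all

lemma meas_stdN2: "f \<in> borel_measurable ((borel::real measure) \<Otimes>\<^sub>M (borel::real measure)) \<Longrightarrow> f \<in> borel_measurable stdN2"
  using measurable_cong_sets[OF sets_stdN2[symmetric] refl] by blast

lemma vec_meas:
  fixes f :: "'a \<Rightarrow> 'b::euclidean_space^'n"
  assumes "\<And>i. (\<lambda>x. f x $ i) \<in> borel_measurable M"
  shows "f \<in> borel_measurable M"
  apply (subst borel_measurable_euclidean_space)
  apply (auto simp: Basis_vec_def inner_axis)
  using assms by measurable

lemma scal:
  fixes w g x :: real assumes "x \<ge> 0"
  shows "(w - g * sqrt x)^2 \<le> g^2*x + w^2*(if g*w<0 then 1 else 0)*x + (\<bar>g\<bar>+sqrt(g^2+w^2))^2"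
proof -
  have s: "sqrt x ^2 = x" using assms by simp
  have f: "(\<bar>g\<bar>+sqrt(g^2+w^2))^2 \<ge> g^2 + w^2"
  proof -
    have "(\<bar>g\<bar>+sqrt(g^2+w^2))^2 = g^2 + (g^2+w^2) + 2*\<bar>g\<bar>* sqrt(g^2+w^2)"
      by (simp add: power2_eq_square algebra_simps)
    moreover have "0 \<le> 2*\<bar>g\<bar>* sqrt(g^2+w^2)" by simp
    ultimately show ?thesis using zero_le_power2[of g] by linarith
  qed
  have e: "(w - g * sqrt x)^2 = w^2 - 2*(g*w)* sqrt x + g^2*x"
    using s by (simp add: power2_eq_square algebra_simps)
  show ?thesis
  proof (cases "g*w < 0")
    case True
    have am: "2*\<bar>g\<bar>*(\<bar>w\<bar>* sqrt x) \<le> \<bar>g\<bar>^2 + (\<bar>w\<bar>* sqrt x)^2"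
      using power2_diff[of "\<bar>g\<bar>" "\<bar>w\<bar>* sqrt x"] zero_le_power2[of "\<bar>g\<bar> - \<bar>w\<bar>* sqrt x"] by linarith
    have q: "(\<bar>w\<bar>* sqrt x)^2 = w^2 * x" using s by (simp add: power_mult_distrib)
    have r: "- (g*w) = \<bar>g\<bar>*\<bar>w\<bar>" using True by (metis abs_mult abs_of_neg)
    have h1: "-(2*(g*w)* sqrt x) = 2*\<bar>g\<bar>*(\<bar>w\<bar>* sqrt x)"
    proof -
      have "-(2*(g*w)* sqrt x) = 2*(-(g*w))* sqrt x" by simp
      also have "\<dots> = 2*(\<bar>g\<bar>*\<bar>w\<bar>)* sqrt x" using r by simp
      finally show ?thesis by (simp add: mult.assoc)
    qed
    have ind: "(if g*w<0 then 1 else 0) = (1::real)" using True by simp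
    have z: "w^2*(if g*w<0 then 1 else 0)*x = w^2*x" unfolding ind by simp
    show ?thesis unfolding z using e f am q h1 power2_abs[of g] by linarith
  next
    case False
    have "0 \<le> (g*w)* sqrt x" using False assms by simp
    moreover have ind: "(if g*w<0 then 1 else 0) = (0::real)" using False by simp
    moreover have z: "w^2*(if g*w<0 then 1 else 0)*x = 0" unfolding ind by simp
    ultimately show ?thesis unfolding z using e f zero_le_power2[of g] zero_le_power2[of w] by linarith
  qed
qed


lemma norm_mono_vec:
  fixes v w :: "real^'n"
  assumes "\<And>i. 0 \<le> v$i" "\<And>i. v$i \<le> w$i"
  shows "norm v \<le> norm w"
  unfolding norm_vec_def L2_set_def
  apply (rule real_sqrt_le_mono, rule sum_mono)
  using assms by (simp add: power_mono)



lemma mnorm_tri: "mnorm A \<le> mnorm B + mnorm (A - B)"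
proof -
  have "mnorm A = onorm (\<lambda>v. (A - B) *v v + B *v v)"
    unfolding mnorm_def by (simp add: matrix_vector_mult_diff_rdistrib)
  also have "\<dots> \<le> mnorm (A - B) + mnorm B" unfolding mnorm_def
    by (rule onorm_triangle) (rule matrix_vector_mul_bounded_linear)+
  finally show ?thesis by simp
qed

lemma entry_le: fixes C :: "real^'n^'m" shows "\<bar>C$i$j\<bar> \<le> norm C"
proof -
  have a: "\<bar>C$i$j\<bar> \<le> norm (C$i)" by (rule component_le_norm_cart)
  have b: "norm (C$i) \<le> norm C" unfolding norm_vec_def by (rule member_le_L2_set) simp_all
  from a b show ?thesis by (rule order_trans)
qed

lemma mnorm_le: fixes C :: "real^2^2" shows "mnorm C \<le> 4 * norm C"
proof -
  have "mnorm C \<le> real (CARD(2)) * real (CARD(2)) * norm C"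
    unfolding mnorm_def by (rule onorm_le_matrix_component) (rule entry_le)
  then show ?thesis by simp
qed

lemma mnorm_lip: "\<bar>mnorm A - mnorm B\<bar> \<le> 4 * norm (A - B)"
proof -
  have "norm (B - A) = norm (A - B)" by (rule norm_minus_commute)
  then show ?thesis using mnorm_tri[of A B] mnorm_tri[of B A] mnorm_le[of "A - B"] mnorm_le[of "B - A"] by linarith
qed

lemma mnorm_cont: "continuous_on UNIV mnorm"
  apply (rule lipschitz_on_continuous_on[where L=4])
  unfolding lipschitz_on_def dist_real_def dist_norm using mnorm_lip by auto


lemma vec2_nth: "vec2 a b $ j = (if j = 1 then a else b)"
  by (simp add: vec2_def)

lemma vec2_comp_meas[measurable]: "(\<lambda>w::real\<times>real. vec2 (fst w) (snd w) $ j) \<in> borel_measurable ((borel::real measure) \<Otimes>\<^sub>M (borel::real measure))"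
  by (cases "j = 1") (simp_all add: vec2_nth)

lemma meas_M: "(\<lambda>w::real\<times>real. Bmat \<beta> \<alpha> \<gamma> + bmat \<alpha> \<gamma> (vec2 (fst w) (snd w))) \<in> borel_measurable ((borel::real measure) \<Otimes>\<^sub>M (borel::real measure))"
  apply (rule vec_meas)+
  apply (simp add: Bmat_def bmat_def)
  by measurable

lemma meas_F: "(\<lambda>w::real\<times>real. \<alpha> *v ffun \<gamma> (vec2 (fst w) (snd w))) \<in> borel_measurable ((borel::real measure) \<Otimes>\<^sub>M (borel::real measure))"
  apply (rule vec_meas)
  apply (simp add: ffun_def matrix_vector_mult_def)
  by measurable

lemma lin:
  fixes u c d x f a b :: real
  assumes "u \<le> c*x + d*x + f" "0 \<le> a"
  shows "b*x + a*u \<le> (b + a*c + a*d)*x + a*f"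
proof -
  have "a*u \<le> a*(c*x + d*x + f)" using assms by (simp add: mult_left_mono)
  then show ?thesis by (simp add: algebra_simps)
qed

lemma pointwise:
  fixes \<omega> \<gamma> x W :: "real^2" and \<alpha> \<beta> :: "real^2^2"
  assumes om: "\<forall>i. \<omega>$i > 0" and bn: "\<forall>i j. \<beta>$i$j \<ge> 0" and an: "\<forall>i j. \<alpha>$i$j \<ge> 0"
    and xn: "\<forall>j. x$j \<ge> 0"
  shows "norm (garch_step \<omega> \<beta> \<alpha> \<gamma> x W) \<le> norm \<omega> + mnorm (Bmat \<beta> \<alpha> \<gamma> + bmat \<alpha> \<gamma> W) * norm x + norm (\<alpha> *v ffun \<gamma> W)"
proof -
  define M where "M = Bmat \<beta> \<alpha> \<gamma> + bmat \<alpha> \<gamma> W"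
  define u where "u = (\<chi> j. (W$j - \<gamma>$j * sqrt (x$j))\<^sup>2)"
  define f where "f = ffun \<gamma> W"
  define g where "g = garch_step \<omega> \<beta> \<alpha> \<gamma> x W"
  define R where "R = \<omega> + M *v x + \<alpha> *v f"
  have gi: "g$i = \<omega>$i + (\<Sum>j\<in>UNIV. \<beta>$i$j * x$j + \<alpha>$i$j * u$j)" for i
    by (simp add: g_def u_def garch_step_def matrix_vector_mult_def sum.distrib)
  have Ri: "R$i = \<omega>$i + (\<Sum>j\<in>UNIV. M$i$j * x$j + \<alpha>$i$j * f$j)" for i
    by (simp add: R_def matrix_vector_mult_def sum.distrib)
  have trm: "\<beta>$i$j * x$j + \<alpha>$i$j * u$j \<le> M$i$j * x$j + \<alpha>$i$j * f$j" for i j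
  proof -
    define I where "I = (if \<gamma>$j * W$j<0 then 1 else (0::real))"
    have sc: "u$j \<le> (\<gamma>$j)^2 * x$j + ((W$j)^2 * I) * x$j + f$j"
      unfolding u_def f_def ffun_def I_def using scal[of "x$j" "W$j" "\<gamma>$j"] xn by simp
    have Me: "M$i$j = \<beta>$i$j + \<alpha>$i$j * (\<gamma>$j)^2 + \<alpha>$i$j * ((W$j)^2 * I)"
      by (simp add: M_def Bmat_def bmat_def I_def)
    show ?thesis unfolding Me using lin[OF sc] an by blast
  qed
  have g0: "0 \<le> g$i" for i
  proof -
    have "0 \<le> \<beta>$i$j * x$j + \<alpha>$i$j * u$j" for j
      using bn an xn by (simp add: u_def)
    then have "0 \<le> (\<Sum>j\<in>UNIV. \<beta>$i$j * x$j + \<alpha>$i$j * u$j)" by (rule sum_nonneg)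
    moreover have "0 < \<omega>$i" using om by blast
    ultimately show ?thesis unfolding gi by linarith
  qed
  have gR: "g$i \<le> R$i" for i
    unfolding gi Ri using sum_mono[of UNIV, OF trm] by simp
  have "norm g \<le> norm R" by (rule norm_mono_vec[OF g0 gR])
  also have "norm R \<le> norm \<omega> + norm (M *v x) + norm (\<alpha> *v f)"
  proof -
    have "norm R \<le> norm (\<omega> + M *v x) + norm (\<alpha> *v f)" unfolding R_def by (rule norm_triangle_ineq)
    moreover have "norm (\<omega> + M *v x) \<le> norm \<omega> + norm (M *v x)" by (rule norm_triangle_ineq)
    ultimately show ?thesis by linarith
  qed
  also have "norm (M *v x) \<le> mnorm M * norm x"
    unfolding mnorm_def by (rule onorm) (rule matrix_vector_mul_bounded_linear)
  finally show ?thesis unfolding g_def M_def f_def by simp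
qed

theorem mainTheorem5:
  fixes \<omega> \<gamma> :: "real^2" and \<alpha> \<beta> :: "real^2^2" and \<phi> c :: ennreal
  assumes omega_pos: "\<forall>i. \<omega>$i > 0"
    and beta_nonneg: "\<forall>i j. \<beta>$i$j \<ge> 0"
    and alpha_nonneg: "\<forall>i j. \<alpha>$i$j \<ge> 0"
    and alpha_rows: "\<alpha>$1$1 + \<alpha>$1$2 > 0" "\<alpha>$2$1 + \<alpha>$2$2 > 0"
    and beta_rows: "\<beta>$1$1 + \<beta>$1$2 > 0" "\<beta>$2$1 + \<beta>$2$2 > 0"
    and phi_def: "\<phi> = (\<integral>\<^sup>+ w. ennreal (mnorm (Bmat \<beta> \<alpha> \<gamma> + bmat \<alpha> \<gamma> (vec2 (fst w) (snd w)))) \<partial>stdN2)"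
    and c_def: "c = ennreal (norm \<omega>) + (\<integral>\<^sup>+ w. ennreal (norm (\<alpha> *v ffun \<gamma> (vec2 (fst w) (snd w)))) \<partial>stdN2)"
    and c_fin: "c < \<infinity>"
  shows "\<forall>x \<in> stateD \<omega>.
    (\<integral>\<^sup>+ w. ennreal (norm (garch_step \<omega> \<beta> \<alpha> \<gamma> x (vec2 (fst w) (snd w)))) \<partial>stdN2)
      \<le> \<phi> * ennreal (norm x) + c"
proof
  fix x assume xD: "x \<in> stateD \<omega>"
  have xn: "\<forall>j. x$j \<ge> 0"
  proof
    fix j :: 2
    have "\<omega>$1 \<le> x$1" "\<omega>$2 \<le> x$2" using xD by (auto simp: stateD_def)
    moreover have "\<omega>$1 > 0" "\<omega>$2 > 0" using omega_pos by auto
    ultimately show "x$j \<ge> 0" using exhaust_2[of j] by auto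
  qed
  define m where "m = (\<lambda>w::real\<times>real. mnorm (Bmat \<beta> \<alpha> \<gamma> + bmat \<alpha> \<gamma> (vec2 (fst w) (snd w))))"
  define F where "F = (\<lambda>w::real\<times>real. norm (\<alpha> *v ffun \<gamma> (vec2 (fst w) (snd w))))"
  have mm: "(\<lambda>w. ennreal (m w)) \<in> borel_measurable stdN2"
  proof -
    have "m \<in> borel_measurable ((borel::real measure) \<Otimes>\<^sub>M (borel::real measure))" unfolding m_def
      using measurable_compose[OF meas_M borel_measurable_continuous_onI[OF mnorm_cont]] by (simp add: o_def)
    then show ?thesis by (intro meas_stdN2) measurable
  qed
  have Fm: "(\<lambda>w. ennreal (F w)) \<in> borel_measurable stdN2"
  proof -
    have "F \<in> borel_measurable ((borel::real measure) \<Otimes>\<^sub>M (borel::real measure))" unfolding F_def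
      using measurable_compose[OF meas_F[of \<alpha> \<gamma>] borel_measurable_norm] by (simp add: o_def)
    then show ?thesis by (intro meas_stdN2) measurable
  qed
  have m0: "0 \<le> m w" for w unfolding m_def mnorm_def by (rule onorm_pos_le) (rule matrix_vector_mul_bounded_linear)
  have "(\<integral>\<^sup>+ w. ennreal (norm (garch_step \<omega> \<beta> \<alpha> \<gamma> x (vec2 (fst w) (snd w)))) \<partial>stdN2)
     \<le> (\<integral>\<^sup>+ w. ennreal (norm \<omega>) + (ennreal (m w) * ennreal (norm x) + ennreal (F w)) \<partial>stdN2)"
  proof (rule nn_integral_mono)
    fix w
    have "norm (garch_step \<omega> \<beta> \<alpha> \<gamma> x (vec2 (fst w) (snd w))) \<le> norm \<omega> + (m w * norm x + F w)"
      using pointwise[OF omega_pos beta_nonneg alpha_nonneg xn] unfolding m_def F_def by (simp add: add.assoc)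
    then show "ennreal (norm (garch_step \<omega> \<beta> \<alpha> \<gamma> x (vec2 (fst w) (snd w)))) \<le> ennreal (norm \<omega>) + (ennreal (m w) * ennreal (norm x) + ennreal (F w))"
    proof -
      assume h: "norm (garch_step \<omega> \<beta> \<alpha> \<gamma> x (vec2 (fst w) (snd w))) \<le> norm \<omega> + (m w * norm x + F w)"
      have F0: "0 \<le> F w" unfolding F_def by simp
      have mx: "0 \<le> m w * norm x" using m0[of w] by simp
      have eq: "ennreal (norm \<omega>) + (ennreal (m w) * ennreal (norm x) + ennreal (F w)) = ennreal (norm \<omega> + (m w * norm x + F w))"
        using F0 mx m0[of w] by (simp add: ennreal_plus ennreal_mult)
      have "ennreal (norm (garch_step \<omega> \<beta> \<alpha> \<gamma> x (vec2 (fst w) (snd w)))) \<le> ennreal (norm \<omega> + (m w * norm x + F w))"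
        using h by (rule ennreal_leI)
      then show ?thesis by (simp only: eq)
    qed
  qed
  also have "\<dots> = (\<integral>\<^sup>+ w. ennreal (norm \<omega>) \<partial>stdN2) + ((\<integral>\<^sup>+ w. ennreal (m w) * ennreal (norm x) \<partial>stdN2) + (\<integral>\<^sup>+ w. ennreal (F w) \<partial>stdN2))"
    using mm Fm by (simp add: nn_integral_add)
  also have "\<dots> = ennreal (norm \<omega>) + (\<phi> * ennreal (norm x) + (\<integral>\<^sup>+ w. ennreal (F w) \<partial>stdN2))"
    using mm prob_space.emeasure_space_1[OF ps] by (simp add: nn_integral_multc phi_def m_def)
  also have "\<dots> = \<phi> * ennreal (norm x) + c" unfolding c_def F_def by (simp add: add_ac)
  finally show "(\<integral>\<^sup>+ w. ennreal (norm (garch_step \<omega> \<beta> \<alpha> \<gamma> x (vec2 (fst w) (snd w)))) \<partial>stdN2) \<le> \<phi> * ennreal (norm x) + c" .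
qed

end
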